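(* Let $n\ge1$, $f\in L^2([0,1]^n)$ and $\pi\in S_n$. Then $f$ and $\pi(f)$ have the same best shifted $L$-statistic approximation $f_L$, and $\|\pi(f)-f_L\|=\|f-f_L\|$.
   Context: $L^2([0,1]^n)$ is the space of square integrable real functions on $[0,1]^n$ modulo equality almost everywhere, with norm $\|g\|=(\int_{[0,1]^n}g^2\,d\mathbf{x})^{1/2}$. $S_n$ is the symmetric group on $\{1,\ldots,n\}$, acting on functions by $\pi(f)(x_1,\ldots,x_n)=f(x_{\pi(1)},\ldots,x_{\pi(n)})$. For $\mathbf{x}\in[0,1]^n$, $x_{(1)}\le\cdots\le x_{(n)}$ are its coordinates in ascending order and $\mathrm{os}_k(\mathbf{x})=x_{(k)}$. Let $V_L$ be the span of $\mathrm{os}_1,\ldots,\mathrm{os}_n$ and the constant $1$ (shifted $L$-statistic functions). The best shifted $L$-statistic approximation $f_L$ of $f$ is the unique $g\in V_L$ minimizing $\|f-g\|$. *)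

theory Defs
  imports "HOL-Analysis.Analysis" "HOL-Library.Multiset" "HOL-Combinatorics.Permutations"
begin

text \<open>Functions on [0,1]^n are modelled as functions real^'n => real, where the
  finite type 'n indexes the coordinates (n = CARD('n) >= 1).\<close>

abbreviation unit_cube :: "(real ^ 'n) set" where
  "unit_cube \<equiv> cbox 0 One"

definition in_L2 :: "(real ^ 'n \<Rightarrow> real) \<Rightarrow> bool" where
  "in_L2 f \<longleftrightarrow> f \<in> borel_measurable (lebesgue_on (unit_cube :: (real ^ 'n) set))
      \<and> integrable (lebesgue_on (unit_cube :: (real ^ 'n) set)) (\<lambda>x. (f x)\<^sup>2)"

definition L2_norm :: "(real ^ 'n \<Rightarrow> real) \<Rightarrow> real" where
  "L2_norm g = sqrt (integral\<^sup>L (lebesgue_on (unit_cube :: (real ^ 'n) set)) (\<lambda>x. (g x)\<^sup>2))"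

definition os :: "nat \<Rightarrow> real ^ 'n \<Rightarrow> real" where
  "os k x = sorted_list_of_multiset (image_mset (\<lambda>i. x $ i) (mset_set (UNIV :: 'n set))) ! (k - 1)"

definition V_L :: "(real ^ 'n \<Rightarrow> real) set" where
  "V_L = {g. \<exists>c0 (c :: nat \<Rightarrow> real).
            g = (\<lambda>x. c0 + (\<Sum>k\<in>{1..CARD('n)}. c k * os k x))}"

definition is_best_L :: "(real ^ 'n \<Rightarrow> real) \<Rightarrow> (real ^ 'n \<Rightarrow> real) \<Rightarrow> bool" where
  "is_best_L f g \<longleftrightarrow> g \<in> V_L \<and> (\<forall>h\<in>V_L. L2_norm (\<lambda>x. f x - g x) \<le> L2_norm (\<lambda>x. f x - h x))"

definition best_L :: "(real ^ 'n \<Rightarrow> real) \<Rightarrow> (real ^ 'n \<Rightarrow> real)" where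
  "best_L f = (THE g. is_best_L f g)"

definition perm_act :: "('n \<Rightarrow> 'n) \<Rightarrow> (real ^ 'n \<Rightarrow> real) \<Rightarrow> (real ^ 'n \<Rightarrow> real)" where
  "perm_act \<pi> f = (\<lambda>x. f (\<chi> i. x $ \<pi> i))"

end

theory Submission
  imports Defs
begin

lemma sorted_nth_le_iff:
  fixes xs :: "real list"
  assumes "sorted xs" "k < length xs"
  shows "xs ! k \<le> t \<longleftrightarrow> k < length (filter (\<lambda>v. v \<le> t) xs)"
  using assms
proof (induction xs arbitrary: k)
  case Nil then show ?case by simp
next
  case (Cons a ys)
  show ?case
  proof (cases "a \<le> t")
    case True
    then show ?thesis using Cons by (cases k) auto
  next
    case False
    then have "filter (\<lambda>v. v \<le> t) ys = []" using Cons.prems(1)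
      by (auto simp: filter_empty_conv)
    moreover have "(a # ys) ! k \<ge> a" using Cons.prems
      by (cases k) auto
    ultimately show ?thesis using False by auto
  qed
qed

lemma os_le_iff:
  fixes x :: "real ^ 'n"
  assumes "1 \<le> k" "k \<le> CARD('n)"
  shows "os k x \<le> t \<longleftrightarrow> k \<le> card {i. x $ i \<le> t}"
proof -
  define ms where "ms = image_mset (\<lambda>i. x $ i) (mset_set (UNIV :: 'n set))"
  define xs where "xs = sorted_list_of_multiset ms"
  have len: "length xs = CARD('n)"
    by (metis xs_def ms_def mset_sorted_list_of_multiset size_image_mset size_mset size_mset_set)
  have srt: "sorted xs" unfolding xs_def by simp
  have "length (filter (\<lambda>v. v \<le> t) xs) = size (filter_mset (\<lambda>v. v \<le> t) ms)"
    by (metis xs_def mset_filter mset_sorted_list_of_multiset size_mset)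
  also have "\<dots> = card {i. x $ i \<le> t}"
    unfolding ms_def filter_mset_image_mset by (simp add: filter_mset_mset_set)
  finally have c: "length (filter (\<lambda>v. v \<le> t) xs) = card {i. x $ i \<le> t}" .
  have "os k x = xs ! (k - 1)" unfolding os_def xs_def ms_def by simp
  then show ?thesis using sorted_nth_le_iff[OF srt, of "k-1" t] len c assms by auto
qed

lemma os_in_range:
  fixes x :: "real ^ 'n"
  assumes "1 \<le> k" "k \<le> CARD('n)"
  shows "\<exists>i. os k x = x $ i"
proof -
  define ms where "ms = image_mset (\<lambda>i. x $ i) (mset_set (UNIV :: 'n set))"
  define xs where "xs = sorted_list_of_multiset ms"
  have len: "length xs = CARD('n)"
    by (metis xs_def ms_def mset_sorted_list_of_multiset size_image_mset size_mset size_mset_set)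
  have "os k x = xs ! (k - 1)" unfolding os_def xs_def ms_def by simp
  then have "os k x \<in> set xs" using len assms by auto
  also have "set xs = set_mset ms" unfolding xs_def
    by (metis mset_sorted_list_of_multiset set_mset_mset)
  finally show ?thesis unfolding ms_def by auto
qed

lemma os_perm:
  fixes x :: "real ^ 'n"
  assumes "\<pi> permutes (UNIV :: 'n set)"
  shows "os k (\<chi> i. x $ \<pi> i) = os k x"
proof -
  have "image_mset (\<lambda>i. (\<chi> i. x $ \<pi> i) $ i) (mset_set (UNIV :: 'n set))
      = image_mset (\<lambda>i. x $ i) (image_mset \<pi> (mset_set UNIV))"
    by (simp add: multiset.map_comp o_def)
  also have "image_mset \<pi> (mset_set UNIV) = mset_set (UNIV :: 'n set)"
    using assms by (simp add: image_mset_mset_set permutes_inj permutes_image)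
  finally have eq: "image_mset (\<lambda>i. (\<chi> i. x $ \<pi> i) $ i) (mset_set (UNIV :: 'n set))
      = image_mset (\<lambda>i. x $ i) (mset_set UNIV)" .
  show ?thesis unfolding os_def eq ..
qed

lemma os_lipschitz:
  fixes x y :: "real ^ 'n"
  assumes "1 \<le> k" "k \<le> CARD('n)"
  shows "os k y \<le> os k x + norm (x - y)"
proof -
  have "k \<le> card {i. x $ i \<le> os k x}" using os_le_iff[OF assms, of x "os k x"] by simp
  also have "\<dots> \<le> card {i. y $ i \<le> os k x + norm (x - y)}"
  proof (rule card_mono)
    show "{i. x $ i \<le> os k x} \<subseteq> {i. y $ i \<le> os k x + norm (x - y)}"
    proof
      fix i assume "i \<in> {i. x $ i \<le> os k x}"
      moreover have "\<bar>(x - y) $ i\<bar> \<le> norm (x - y)" by (rule component_le_norm_cart)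
      ultimately show "i \<in> {i. y $ i \<le> os k x + norm (x - y)}" by auto
    qed
  qed simp
  finally show ?thesis using os_le_iff[OF assms] by simp
qed

lemma os_continuous:
  assumes "1 \<le> k" "k \<le> CARD('n)"
  shows "continuous_on UNIV (os k :: real ^ 'n \<Rightarrow> real)"
proof (rule lipschitz_on_continuous_on)
  show "1-lipschitz_on UNIV (os k :: real ^ 'n \<Rightarrow> real)"
  proof (rule lipschitz_onI)
    fix x y :: "real ^ 'n"
    have "os k y \<le> os k x + norm (x - y)" "os k x \<le> os k y + norm (y - x)"
      using os_lipschitz[OF assms] by blast+
    moreover have "norm (y - x) = norm (x - y)" by (rule norm_minus_commute)
    ultimately show "dist (os k x) (os k y) \<le> 1 * dist x y"
      by (simp add: dist_real_def dist_norm abs_le_iff)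
  qed simp
qed

lemma os_indicator:
  fixes A :: "'n::finite set"
  assumes "1 \<le> k" "k \<le> CARD('n)"
  shows "os k (\<chi> i. if i \<in> A then (1::real) else 0) = (if k + card A \<le> CARD('n) then 0 else 1)"
proof -
  let ?x = "\<chi> i. if i \<in> A then (1::real) else 0"
  have "{i. ?x $ i \<le> 0} = - A" by auto
  moreover have "card (- A) = CARD('n) - card A"
    by (simp add: Compl_eq_Diff_UNIV card_Diff_subset)
  moreover have "card A \<le> CARD('n)" by (rule card_mono) auto
  ultimately have le0: "os k ?x \<le> 0 \<longleftrightarrow> k + card A \<le> CARD('n)"
    using os_le_iff[OF assms, of ?x 0] by auto
  obtain i where "os k ?x = ?x $ i" using os_in_range[OF assms] by blast
  then have "os k ?x = 0 \<or> os k ?x = 1" by (auto split: if_splits)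
  then show ?thesis using le0 by auto
qed


definition sinv :: "'n::finite \<Rightarrow> nat" where
  "sinv = (SOME h. bij_betw h UNIV {1..CARD('n)})"

lemma sinv_bij: "bij_betw (sinv :: 'n::finite \<Rightarrow> nat) UNIV {1..CARD('n)}"
proof -
  obtain h :: "nat \<Rightarrow> 'n" where "bij_betw h {1..CARD('n)} UNIV"
    using ex_bij_betw_nat_finite_1[of "UNIV :: 'n set"] by auto
  then have "bij_betw (inv_into {1..CARD('n)} h) UNIV {1..CARD('n)}"
    by (rule bij_betw_inv_into)
  then have ex: "\<exists>h::'n \<Rightarrow> nat. bij_betw h UNIV {1..CARD('n)}" by blast
  show ?thesis unfolding sinv_def by (rule someI_ex[OF ex])
qed

lemma sinv_range: "1 \<le> sinv (i::'n::finite)" "sinv i \<le> CARD('n)"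
  using sinv_bij[where 'n='n] by (auto simp: bij_betw_def)

definition phi :: "'n::finite option \<Rightarrow> real ^ 'n \<Rightarrow> real" where
  "phi j = (case j of None \<Rightarrow> (\<lambda>x. 1) | Some i \<Rightarrow> os (sinv i))"

definition TT :: "real ^ ('n::finite option) \<Rightarrow> real ^ 'n \<Rightarrow> real" where
  "TT u = (\<lambda>x. \<Sum>j\<in>UNIV. u $ j * phi j x)"

lemma sum_option_UNIV:
  fixes f :: "'a::finite option \<Rightarrow> 'b::comm_monoid_add"
  shows "(\<Sum>j\<in>UNIV. f j) = f None + (\<Sum>i\<in>UNIV. f (Some i))"
proof -
  have "(UNIV :: 'a option set) = insert None (range Some)" by (rule UNIV_option_conv)
  moreover have "sum f (insert None (range Some)) = f None + sum f (range Some)"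
    by (rule sum.insert) auto
  ultimately have "(\<Sum>j\<in>UNIV. f j) = f None + sum f (range Some)" by simp
  also have "sum f (range Some) = (\<Sum>i\<in>UNIV. f (Some i))"
    by (simp add: sum.reindex)
  finally show ?thesis .
qed

lemma TT_expand: "TT u x = u $ None + (\<Sum>i\<in>UNIV. u $ Some i * os (sinv i) x)"
  unfolding TT_def by (subst sum_option_UNIV) (simp add: phi_def)

lemma V_L_eq: "(V_L :: (real ^ 'n::finite \<Rightarrow> real) set) = range TT"
proof
  show "(V_L :: (real ^ 'n \<Rightarrow> real) set) \<subseteq> range TT"
  proof
    fix g :: "real ^ 'n \<Rightarrow> real" assume "g \<in> V_L"
    then obtain c0 c where g: "g = (\<lambda>x. c0 + (\<Sum>k\<in>{1..CARD('n)}. c k * os k x))"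
      unfolding V_L_def by auto
    define u :: "real ^ ('n option)" where
      "u = (\<chi> j. case j of None \<Rightarrow> c0 | Some i \<Rightarrow> c (sinv i))"
    have "TT u x = g x" for x
    proof -
      have "(\<Sum>i\<in>UNIV. c (sinv (i::'n)) * os (sinv i) x) = (\<Sum>k\<in>{1..CARD('n)}. c k * os k x)"
        using sum.reindex_bij_betw[OF sinv_bij[where 'n='n], of "\<lambda>k. c k * os k x"] by simp
      then show ?thesis unfolding TT_expand g u_def by simp
    qed
    then show "g \<in> range TT" by (metis rangeI ext)
  qed
next
  show "range TT \<subseteq> (V_L :: (real ^ 'n \<Rightarrow> real) set)"
  proof
    fix g :: "real ^ 'n \<Rightarrow> real" assume "g \<in> range TT"
    then obtain u where g: "g = TT u" by auto
    define c where "c = (\<lambda>k. u $ Some (inv_into UNIV (sinv :: 'n \<Rightarrow> nat) k))"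
    have "g x = u $ None + (\<Sum>k\<in>{1..CARD('n)}. c k * os k x)" for x
    proof -
      have "(\<Sum>i\<in>UNIV. c (sinv (i::'n)) * os (sinv i) x) = (\<Sum>k\<in>{1..CARD('n)}. c k * os k x)"
        using sum.reindex_bij_betw[OF sinv_bij[where 'n='n], of "\<lambda>k. c k * os k x"] by simp
      moreover have "c (sinv i) = u $ Some i" for i :: 'n
        unfolding c_def using bij_betw_imp_inj_on[OF sinv_bij[where 'n='n]]
        by (simp add: inv_into_f_f)
      ultimately show ?thesis unfolding g TT_expand by simp
    qed
    then show "g \<in> V_L" unfolding V_L_def by blast
  qed
qed

abbreviation MM :: "(real ^ 'n::finite) measure" where
  "MM \<equiv> lebesgue_on unit_cube"

lemma cube_lmeas: "(unit_cube :: (real ^ 'n::finite) set) \<in> lmeasurable"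
  by simp

lemma cube_sets: "(unit_cube :: (real ^ 'n::finite) set) \<in> sets lebesgue"
  by simp

lemma MM_finite: "finite_measure (MM :: (real ^ 'n::finite) measure)"
  by (rule finite_measure_lebesgue_on) simp

lemma space_MM: "space (MM :: (real ^ 'n::finite) measure) = unit_cube"
  by simp

lemma phi_cont: "continuous_on UNIV (phi (j :: 'n::finite option))"
  by (cases j) (auto simp: phi_def intro: os_continuous[OF sinv_range])

lemma phi_bound:
  assumes "x \<in> (unit_cube :: (real ^ 'n::finite) set)"
  shows "\<bar>phi (j :: 'n option) x\<bar> \<le> 1"
proof (cases j)
  case (Some i)
  obtain l where "os (sinv i) x = x $ l" using os_in_range[OF sinv_range] by blast
  moreover have "0 \<le> x $ l" "x $ l \<le> 1" using assms by (auto simp: mem_box_cart cart_eq_inner_axis)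
  ultimately show ?thesis using Some by (simp add: phi_def)
qed (simp add: phi_def)

lemma TT_cont: "continuous_on UNIV (TT u)"
  unfolding TT_def by (intro continuous_intros phi_cont)

lemma TT_bound:
  assumes "x \<in> (unit_cube :: (real ^ 'n::finite) set)"
  shows "\<bar>TT u x\<bar> \<le> (\<Sum>j\<in>UNIV. \<bar>u $ j\<bar>)"
proof -
  have "\<bar>TT u x\<bar> \<le> (\<Sum>j\<in>UNIV. \<bar>u $ j * phi j x\<bar>)" unfolding TT_def by (rule sum_abs)
  also have "\<dots> \<le> (\<Sum>j\<in>UNIV. \<bar>u $ j\<bar>)"
  proof (rule sum_mono)
    fix j
    have "\<bar>u $ j * phi j x\<bar> = \<bar>u $ j\<bar> * \<bar>phi j x\<bar>" by (simp add: abs_mult)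
    also have "\<dots> \<le> \<bar>u $ j\<bar> * 1" using phi_bound[OF assms] by (intro mult_left_mono) auto
    finally show "\<bar>u $ j * phi j x\<bar> \<le> \<bar>u $ j\<bar>" by simp
  qed
  finally show ?thesis .
qed

lemma cont_meas: "continuous_on UNIV g \<Longrightarrow> g \<in> borel_measurable (MM :: (real ^ 'n::finite) measure)"
  by (rule continuous_imp_measurable_on_sets_lebesgue) (auto intro: continuous_on_subset)

lemma L2_bounded:
  assumes "g \<in> borel_measurable (MM :: (real ^ 'n::finite) measure)"
    and "\<And>x. x \<in> (unit_cube :: (real ^ 'n) set) \<Longrightarrow> \<bar>g x\<bar> \<le> C"
  shows "in_L2 g"
  unfolding in_L2_def
proof (intro conjI assms)
  show "integrable MM (\<lambda>x. (g x)\<^sup>2)"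
  proof (rule Bochner_Integration.integrable_bound)
    show "integrable MM (\<lambda>x. C\<^sup>2)" by (rule finite_measure.integrable_const[OF MM_finite])
    show "(\<lambda>x. (g x)\<^sup>2) \<in> borel_measurable MM" using assms(1) by measurable
    show "AE x in MM. norm ((g x)\<^sup>2) \<le> norm (C\<^sup>2)"
    proof (rule AE_I2)
      fix x :: "real ^ 'n" assume "x \<in> space (MM :: (real ^ 'n) measure)"
      then have "\<bar>g x\<bar> \<le> C" using assms(2) by simp
      then have "(g x)\<^sup>2 \<le> C\<^sup>2"
        by (metis abs_ge_zero abs_le_square_iff abs_of_nonneg order_trans power2_abs)
      then show "norm ((g x)\<^sup>2) \<le> norm (C\<^sup>2)" by simp
    qed
  qed
qed

lemma TT_L2: "in_L2 (TT (u :: real ^ ('n::finite option)))"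
  by (rule L2_bounded[OF cont_meas[OF TT_cont] TT_bound])

lemma L2_prod:
  assumes "in_L2 g" "in_L2 h"
  shows "integrable (MM :: (real ^ 'n::finite) measure) (\<lambda>x. g x * h x)"
proof (rule Bochner_Integration.integrable_bound)
  show "integrable MM (\<lambda>x. (g x)\<^sup>2 + (h x)\<^sup>2)"
    using assms unfolding in_L2_def by simp
  show "(\<lambda>x. g x * h x) \<in> borel_measurable MM" using assms unfolding in_L2_def
    by (intro borel_measurable_times) auto
  show "AE x in MM. norm (g x * h x) \<le> norm ((g x)\<^sup>2 + (h x)\<^sup>2)"
  proof (rule AE_I2)
    fix x
    have "0 \<le> (\<bar>g x\<bar> - \<bar>h x\<bar>)\<^sup>2" by simp
    then have "2 * \<bar>g x * h x\<bar> \<le> (g x)\<^sup>2 + (h x)\<^sup>2"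
      by (simp add: power2_eq_square algebra_simps abs_mult)
    moreover have "0 \<le> (g x)\<^sup>2 + (h x)\<^sup>2" by simp
    ultimately show "norm (g x * h x) \<le> norm ((g x)\<^sup>2 + (h x)\<^sup>2)" by simp
  qed
qed

lemma L2_add:
  assumes "in_L2 g" "in_L2 (h :: real ^ 'n::finite \<Rightarrow> real)"
  shows "in_L2 (\<lambda>x. g x + h x)"
proof -
  have "integrable MM (\<lambda>x. (g x)\<^sup>2 + 2 * (g x * h x) + (h x)\<^sup>2)"
    using assms L2_prod[OF assms] unfolding in_L2_def by simp
  moreover have "(\<lambda>x. (g x + h x)\<^sup>2) = (\<lambda>x. (g x)\<^sup>2 + 2 * (g x * h x) + (h x)\<^sup>2)"
    by (simp add: fun_eq_iff power2_sum)
  ultimately show ?thesis using assms unfolding in_L2_def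
    by (auto intro: borel_measurable_add)
qed

lemma L2_scale:
  assumes "in_L2 (g :: real ^ 'n::finite \<Rightarrow> real)"
  shows "in_L2 (\<lambda>x. c * g x)"
  using assms unfolding in_L2_def by (auto simp: power_mult_distrib)

lemma L2_diff:
  assumes "in_L2 g" "in_L2 (h :: real ^ 'n::finite \<Rightarrow> real)"
  shows "in_L2 (\<lambda>x. g x - h x)"
  using L2_add[OF assms(1) L2_scale[OF assms(2), of "-1"]] by simp


definition ip :: "(real ^ 'n::finite \<Rightarrow> real) \<Rightarrow> (real ^ 'n \<Rightarrow> real) \<Rightarrow> real" where
  "ip g h = integral\<^sup>L MM (\<lambda>x. g x * h x)"

lemma ip_sym: "ip g h = ip h g"
  unfolding ip_def by (simp add: mult.commute)

lemma ip_add_left: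
  assumes "in_L2 g1" "in_L2 g2" "in_L2 h"
  shows "ip (\<lambda>x. g1 x + g2 x) h = ip g1 h + ip g2 h"
  unfolding ip_def using L2_prod[OF assms(1,3)] L2_prod[OF assms(2,3)]
  by (simp add: distrib_right)

lemma ip_diff_left:
  assumes "in_L2 g1" "in_L2 g2" "in_L2 h"
  shows "ip (\<lambda>x. g1 x - g2 x) h = ip g1 h - ip g2 h"
  unfolding ip_def using L2_prod[OF assms(1,3)] L2_prod[OF assms(2,3)]
  by (simp add: left_diff_distrib)

lemma ip_nonneg: "0 \<le> ip g g"
  unfolding ip_def by simp

lemma phi_L2: "in_L2 (phi (j :: 'n::finite option))"
  by (rule L2_bounded[OF cont_meas[OF phi_cont] phi_bound])

lemma ip_TT_left:
  assumes "in_L2 h"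
  shows "ip (TT u) h = (\<Sum>j\<in>UNIV. u $ j * ip (phi j) h)"
proof -
  have "ip (TT u) h = integral\<^sup>L MM (\<lambda>x. \<Sum>j\<in>UNIV. u $ j * (phi j x * h x))"
    unfolding ip_def TT_def by (simp add: sum_distrib_right mult.assoc)
  also have "\<dots> = (\<Sum>j\<in>UNIV. integral\<^sup>L MM (\<lambda>x. u $ j * (phi j x * h x)))"
    by (rule Bochner_Integration.integral_sum) (use L2_prod[OF phi_L2 assms] in auto)
  also have "\<dots> = (\<Sum>j\<in>UNIV. u $ j * ip (phi j) h)"
    unfolding ip_def by simp
  finally show ?thesis .
qed

lemma TT_add: "TT (u + w) x = TT u x + TT w x"
  unfolding TT_def by (simp add: distrib_right sum.distrib)

lemma TT_diff: "TT (u - w) x = TT u x - TT w x"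
  unfolding TT_def by (simp add: left_diff_distrib sum_subtractf)

lemma TT_scale: "TT (c *\<^sub>R u) x = c * TT u x"
  unfolding TT_def by (simp add: sum_distrib_left mult.assoc)

lemma One_nth [simp]: "(One :: real ^ 'n::finite) $ i = 1"
  by (simp add: cart_eq_inner_axis)

lemma Basis_sum_nth [simp]: "(\<Sum>x\<in>(Basis :: (real ^ 'n::finite) set). x $ i) = 1"
proof -
  have "(\<Sum>x\<in>(Basis :: (real ^ 'n::finite) set). x $ i) = (\<Sum>x\<in>(Basis :: (real ^ 'n::finite) set). x) $ i"
    by (rule sum_component[symmetric])
  also have "\<dots> = 1" by (simp only: cart_eq_inner_axis) simp
  finally show ?thesis .
qed

lemma cube_ne: "box 0 (One :: real ^ 'n::finite) \<noteq> {}"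
proof -
  have "(\<chi> i. (1/2::real)) \<in> box 0 (One :: real ^ 'n)"
    by (simp add: mem_box_cart)
  then show ?thesis by blast
qed

lemma TT_zero_on_cube:
  assumes "ip (TT d) (TT d) = 0" "x \<in> (unit_cube :: (real ^ 'n::finite) set)"
  shows "TT d x = 0"
proof -
  have int: "integrable MM (\<lambda>x. TT d x * TT d x)" by (rule L2_prod[OF TT_L2 TT_L2])
  have "integral unit_cube (\<lambda>x. TT d x * TT d x) = (0::real)"
    using assms(1) lebesgue_integral_eq_integral[OF int cube_sets] unfolding ip_def by simp
  moreover have "continuous_on unit_cube (\<lambda>x. TT d x * TT d x)"
    by (intro continuous_intros continuous_on_subset[OF TT_cont]) auto
  ultimately have "\<forall>x\<in>(unit_cube :: (real ^ 'n) set). TT d x * TT d x = 0"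
    using integral_cbox_eq_0_iff[OF _ cube_ne, of "\<lambda>x. TT d x * TT d x"] by simp
  then show ?thesis using assms(2) by simp
qed

lemma indep:
  assumes "ip (TT d) (TT d) = 0"
  shows "d = (0 :: real ^ ('n::finite option))"
proof -
  define E where "E m = d $ None + (\<Sum>i\<in>UNIV. d $ Some i * (if sinv (i::'n) + m \<le> CARD('n) then 0 else 1))" for m
  have E0: "E m = 0" if mle: "m \<le> CARD('n)" for m
  proof -
    obtain A :: "'n set" where A: "card A = m"
      using obtain_subset_with_card_n[of m "UNIV :: 'n set"] mle by auto
    let ?x = "\<chi> i. if i \<in> A then (1::real) else 0"
    have "?x \<in> unit_cube" by (simp add: mem_box_cart)
    then have "TT d ?x = 0" by (rule TT_zero_on_cube[OF assms])
    moreover have "TT d ?x = E m"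
      unfolding TT_expand E_def using os_indicator[OF sinv_range, of _ A] A by simp
    ultimately show ?thesis by simp
  qed
  have dN: "d $ None = 0"
  proof -
    have "E 0 = d $ None" unfolding E_def by (simp add: sinv_range)
    then show ?thesis using E0[of 0] by simp
  qed
  have dS: "d $ Some i0 = 0" for i0 :: 'n
  proof -
    define k where "k = sinv i0"
    have k: "1 \<le> k" "k \<le> CARD('n)" unfolding k_def by (rule sinv_range)+
    have inj: "inj (sinv :: 'n \<Rightarrow> nat)" using sinv_bij[where 'n='n] by (simp add: bij_betw_def)
    have "E (CARD('n) - k + 1) - E (CARD('n) - k)
        = (\<Sum>i\<in>UNIV. d $ Some i * ((if sinv (i::'n) + (CARD('n) - k + 1) \<le> CARD('n) then 0 else 1)
             - (if sinv i + (CARD('n) - k) \<le> CARD('n) then 0 else 1)))"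
      unfolding E_def by (simp add: sum_subtractf right_diff_distrib)
    also have "\<dots> = (\<Sum>i\<in>UNIV. d $ Some i * (if i = i0 then 1 else 0))"
    proof (rule sum.cong)
      fix i :: 'n
      have "1 \<le> sinv i" "sinv i \<le> CARD('n)" by (rule sinv_range)+
      moreover have "sinv i = k \<longleftrightarrow> i = i0" unfolding k_def using inj by (auto dest: injD)
      ultimately show "d $ Some i * ((if sinv i + (CARD('n) - k + 1) \<le> CARD('n) then 0 else 1)
             - (if sinv i + (CARD('n) - k) \<le> CARD('n) then 0 else 1))
          = d $ Some i * (if i = i0 then 1 else 0)"
        using k by auto
    qed simp
    also have "\<dots> = (\<Sum>i\<in>UNIV. if i = i0 then d $ Some i else 0)"
      by (rule sum.cong) auto
    also have "\<dots> = d $ Some i0" by simp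
    finally show ?thesis using E0[of "CARD('n) - k + 1"] E0[of "CARD('n) - k"] k by simp
  qed
  have "d $ j = 0 $ j" for j using dN dS by (cases j) auto
  then show ?thesis by (simp add: vec_eq_iff)
qed


lemma proj_exists:
  fixes f :: "real ^ 'n::finite \<Rightarrow> real"
  assumes f: "in_L2 f"
  shows "\<exists>v. \<forall>u. ip (\<lambda>x. f x - TT u x) (\<lambda>x. f x - TT u x)
     = ip (\<lambda>x. f x - TT v x) (\<lambda>x. f x - TT v x) + ip (TT (v - u)) (TT (v - u))"
proof -
  define G :: "real ^ ('n option) \<Rightarrow> real ^ ('n option)" where
    "G u = (\<chi> j. ip (TT u) (phi j))" for u
  have Gexp: "G u $ j = (\<Sum>j'\<in>UNIV. u $ j' * ip (phi j') (phi j))" for u j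
    unfolding G_def using ip_TT_left[OF phi_L2] by simp
  have lin: "linear G"
  proof (rule linearI)
    fix u w :: "real ^ ('n option)" and c :: real
    show "G (u + w) = G u + G w"
      by (simp add: vec_eq_iff Gexp distrib_right sum.distrib)
    show "G (c *\<^sub>R u) = c *\<^sub>R G u"
      by (simp add: vec_eq_iff Gexp sum_distrib_left mult.assoc)
  qed
  have G0: "d = 0" if "G d = 0" for d
  proof (rule indep)
    have "ip (TT d) (TT d) = (\<Sum>j\<in>UNIV. d $ j * ip (phi j) (TT d))"
      by (rule ip_TT_left[OF TT_L2])
    also have "\<dots> = (\<Sum>j\<in>UNIV. d $ j * G d $ j)"
      unfolding G_def by (simp add: ip_sym)
    also have "\<dots> = 0" using that by simp
    finally show "ip (TT d) (TT d) = 0" .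
  qed
  have "inj G"
  proof (rule injI)
    fix u w assume "G u = G w"
    then have "G (u - w) = 0" using linear_diff[OF lin] by simp
    then have "u - w = 0" by (rule G0)
    then show "u = w" by simp
  qed
  then have "surj G" by (rule linear_inj_imp_surj[OF lin])
  then obtain v where v: "G v = (\<chi> j. ip f (phi j))" by (metis surjE)
  have orth: "ip (\<lambda>x. f x - TT v x) (TT w) = 0" for w
  proof -
    have "ip f (TT w) = (\<Sum>j\<in>UNIV. w $ j * ip (phi j) f)"
      by (subst ip_sym) (rule ip_TT_left[OF f])
    also have "\<dots> = (\<Sum>j\<in>UNIV. w $ j * G v $ j)" unfolding v by (simp add: ip_sym)
    also have "\<dots> = (\<Sum>j\<in>UNIV. w $ j * ip (phi j) (TT v))"
      unfolding G_def by (simp add: ip_sym)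
    also have "\<dots> = ip (TT v) (TT w)"
      by (subst ip_sym) (rule ip_TT_left[OF TT_L2, symmetric])
    finally have "ip f (TT w) = ip (TT v) (TT w)" .
    moreover have "ip (\<lambda>x. f x - TT v x) (TT w) = ip f (TT w) - ip (TT v) (TT w)"
      by (rule ip_diff_left[OF f TT_L2 TT_L2])
    ultimately show ?thesis by simp
  qed
  show ?thesis
  proof (intro exI allI)
    fix u
    define r where "r = (\<lambda>x. f x - TT v x)"
    define e where "e = TT (v - u)"
    have rL: "in_L2 r" unfolding r_def by (rule L2_diff[OF f TT_L2])
    have eL: "in_L2 e" unfolding e_def by (rule TT_L2)
    have eq: "(\<lambda>x. f x - TT u x) = (\<lambda>x. r x + e x)"
      unfolding r_def e_def by (simp add: TT_diff fun_eq_iff)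
    have re: "ip r e = 0" unfolding r_def e_def by (rule orth)
    have "ip (\<lambda>x. r x + e x) (\<lambda>x. r x + e x) = ip r (\<lambda>x. r x + e x) + ip e (\<lambda>x. r x + e x)"
      by (rule ip_add_left[OF rL eL L2_add[OF rL eL]])
    also have "ip r (\<lambda>x. r x + e x) = ip r r + ip e r"
      by (subst ip_sym) (rule ip_add_left[OF rL eL rL])
    also have "ip e (\<lambda>x. r x + e x) = ip r e + ip e e"
      by (subst ip_sym) (rule ip_add_left[OF rL eL eL])
    finally have "ip (\<lambda>x. r x + e x) (\<lambda>x. r x + e x) = ip r r + ip e e"
      using re ip_sym[of e r] by simp
    then show "ip (\<lambda>x. f x - TT u x) (\<lambda>x. f x - TT u x)
       = ip (\<lambda>x. f x - TT v x) (\<lambda>x. f x - TT v x) + ip (TT (v - u)) (TT (v - u))"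
      unfolding eq by (simp add: r_def e_def)
  qed
qed

lemma L2_norm_ip: "L2_norm g = sqrt (ip g g)"
  unfolding L2_norm_def ip_def by (simp add: power2_eq_square)

lemma best_L_in_V:
  fixes f :: "real ^ 'n::finite \<Rightarrow> real"
  assumes f: "in_L2 f"
  shows "best_L f \<in> V_L"
proof -
  obtain v where v: "\<And>u. ip (\<lambda>x. f x - TT u x) (\<lambda>x. f x - TT u x)
     = ip (\<lambda>x. f x - TT v x) (\<lambda>x. f x - TT v x) + ip (TT (v - u)) (TT (v - u))"
    using proj_exists[OF f] by blast
  have "best_L f = TT v"
    unfolding best_L_def
  proof (rule the_equality)
    show "is_best_L f (TT v)"
      unfolding is_best_L_def
    proof
      show "TT v \<in> V_L" by (simp add: V_L_eq)
      show "\<forall>h\<in>V_L. L2_norm (\<lambda>x. f x - TT v x) \<le> L2_norm (\<lambda>x. f x - h x)"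
      proof
        fix h :: "real ^ 'n \<Rightarrow> real" assume "h \<in> V_L"
        then obtain u where h: "h = TT u" by (auto simp: V_L_eq)
        show "L2_norm (\<lambda>x. f x - TT v x) \<le> L2_norm (\<lambda>x. f x - h x)"
          unfolding h L2_norm_ip v[of u] using ip_nonneg[of "TT (v - u)"] by simp
      qed
    qed
  next
    fix g assume "is_best_L f g"
    then have gV: "g \<in> V_L" and le: "L2_norm (\<lambda>x. f x - g x) \<le> L2_norm (\<lambda>x. f x - TT v x)"
      unfolding is_best_L_def by (auto simp: V_L_eq)
    obtain u where g: "g = TT u" using gV by (auto simp: V_L_eq)
    have "sqrt (ip (\<lambda>x. f x - TT u x) (\<lambda>x. f x - TT u x)) \<le> sqrt (ip (\<lambda>x. f x - TT v x) (\<lambda>x. f x - TT v x))"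
      using le unfolding g L2_norm_ip .
    then have "ip (\<lambda>x. f x - TT u x) (\<lambda>x. f x - TT u x) \<le> ip (\<lambda>x. f x - TT v x) (\<lambda>x. f x - TT v x)"
      by simp
    then have "ip (TT (v - u)) (TT (v - u)) = 0"
      using v[of u] ip_nonneg[of "TT (v - u)"] by simp
    then have "v - u = 0" by (rule indep)
    then show "g = TT v" using g by simp
  qed
  then show ?thesis by (simp add: V_L_eq)
qed


lemma perm_box_image:
  fixes u v :: "real ^ 'n::finite"
  assumes s: "\<sigma> permutes (UNIV :: 'n set)"
  shows "(\<lambda>x. \<chi> i. x $ \<sigma> i) ` cbox u v = cbox (\<chi> i. u $ \<sigma> i) (\<chi> i. v $ \<sigma> i)"
proof
  show "(\<lambda>x. \<chi> i. x $ \<sigma> i) ` cbox u v \<subseteq> cbox (\<chi> i. u $ \<sigma> i) (\<chi> i. v $ \<sigma> i)"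
    by (auto simp: mem_box_cart)
  show "cbox (\<chi> i. u $ \<sigma> i) (\<chi> i. v $ \<sigma> i) \<subseteq> (\<lambda>x. \<chi> i. x $ \<sigma> i) ` cbox u v"
  proof
    fix y assume y: "y \<in> cbox (\<chi> i. u $ \<sigma> i) (\<chi> i. v $ \<sigma> i)"
    define z where "z = (\<chi> j. y $ inv \<sigma> j)"
    have "y = (\<chi> i. z $ \<sigma> i)"
      unfolding z_def using permutes_inverses(2)[OF s] by (simp add: vec_eq_iff)
    moreover have "z \<in> cbox u v"
    proof -
      have "u $ j \<le> z $ j \<and> z $ j \<le> v $ j" for j
        using y[unfolded mem_box_cart, rule_format, of "inv \<sigma> j"] permutes_inverses(1)[OF s]
        unfolding z_def by simp
      then show ?thesis by (simp add: mem_box_cart)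
    qed
    ultimately show "y \<in> (\<lambda>x. \<chi> i. x $ \<sigma> i) ` cbox u v" by blast
  qed
qed

lemma perm_content:
  fixes u v :: "real ^ 'n::finite"
  assumes s: "\<sigma> permutes (UNIV :: 'n set)"
  shows "Henstock_Kurzweil_Integration.content ((\<lambda>x. \<chi> i. x $ \<sigma> i) ` cbox u v) = 1 * Henstock_Kurzweil_Integration.content (cbox u v)"
proof -
  have e: "cbox (\<chi> i. u $ \<sigma> i) (\<chi> i. v $ \<sigma> i) = {} \<longleftrightarrow> cbox u v = {}"
    using perm_box_image[OF s, of u v] by auto
  have "(\<Prod>i\<in>UNIV. (\<chi> i. v $ \<sigma> i) $ i - (\<chi> i. u $ \<sigma> i) $ i) = (\<Prod>i\<in>UNIV. ((\<lambda>i. v $ i - u $ i) \<circ> \<sigma>) i)"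
    by simp
  also have "\<dots> = (\<Prod>i\<in>UNIV. v $ i - u $ i)" by (rule prod.permute[OF s, symmetric])
  finally show ?thesis
    unfolding perm_box_image[OF s] content_cbox_if_cart e by simp
qed

lemma perm_cube:
  assumes s: "\<sigma> permutes (UNIV :: 'n::finite set)"
  shows "(\<lambda>x. \<chi> i. x $ \<sigma> i) ` (unit_cube :: (real ^ 'n) set) = unit_cube"
proof -
  have "(\<chi> i. (0 :: real ^ 'n) $ \<sigma> i) = 0" by (simp add: vec_eq_iff)
  moreover have "(\<chi> i. (One :: real ^ 'n) $ \<sigma> i) = One"
    by (simp add: vec_eq_iff)
  ultimately show ?thesis using perm_box_image[OF s, of 0 One] by simp
qed

lemma perm_integral:
  fixes F :: "real ^ 'n::finite \<Rightarrow> real"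
  assumes s: "\<pi> permutes (UNIV :: 'n set)"
    and F: "integrable MM F" and nn: "\<And>x. 0 \<le> F x"
  shows "integral\<^sup>L MM (\<lambda>x. F (\<chi> i. x $ \<pi> i)) = integral\<^sup>L MM F"
proof -
  let ?P = "\<lambda>x::real ^ 'n. \<chi> i. x $ \<pi> i"
  let ?Q = "\<lambda>x::real ^ 'n. \<chi> i. x $ inv \<pi> i"
  have si: "inv \<pi> permutes (UNIV :: 'n set)" by (rule permutes_inv[OF s])
  have hI: "(F has_integral integral\<^sup>L MM F) unit_cube"
    by (rule has_integral_integral_lebesgue_on[OF F cube_sets])
  have linP: "linear ?P" by (rule linearI) (simp_all add: vec_eq_iff)
  have "((\<lambda>x. F (?P x)) has_integral (1 / 1) *\<^sub>R integral\<^sup>L MM F) (?Q ` unit_cube)"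
  proof (rule has_integral_twiddle[where g = ?P and h = ?Q])
    show "?Q (?P x) = x" for x
      using permutes_inverses[OF s] by (simp add: vec_eq_iff)
    show "?P (?Q x) = x" for x
      using permutes_inverses[OF s] by (simp add: vec_eq_iff)
    show "continuous (at x) ?P" for x by (rule linear_continuous_at[OF linear_conv_bounded_linear[THEN iffD1, OF linP]])
    show "\<exists>w z. ?P ` cbox u v = cbox w z" for u v using perm_box_image[OF s] by blast
    show "\<exists>w z. ?Q ` cbox u v = cbox w z" for u v using perm_box_image[OF si] by blast
    show "Henstock_Kurzweil_Integration.content (?P ` cbox u v) = 1 * Henstock_Kurzweil_Integration.content (cbox u v)" for u v by (rule perm_content[OF s])
  qed (use hI in auto)
  then have hP: "((\<lambda>x. F (?P x)) has_integral integral\<^sup>L MM F) unit_cube"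
    using perm_cube[OF si] by simp
  then have "(\<lambda>x. F (?P x)) absolutely_integrable_on unit_cube"
    by (intro nonnegative_absolutely_integrable_1) (auto simp: nn)
  then have "integrable MM (\<lambda>x. F (?P x))"
    by (rule absolutely_integrable_imp_integrable[OF _ cube_sets])
  then have "integral\<^sup>L MM (\<lambda>x. F (?P x)) = integral unit_cube (\<lambda>x. F (?P x))"
    by (rule lebesgue_integral_eq_integral[OF _ cube_sets])
  also have "\<dots> = integral\<^sup>L MM F" using hP by (rule integral_unique)
  finally show ?thesis .
qed

theorem proposition10:
  fixes f :: "real ^ 'n \<Rightarrow> real" and \<pi> :: "'n \<Rightarrow> 'n"
  assumes "in_L2 f"
    and "\<pi> permutes (UNIV :: 'n set)"
  shows "best_L (perm_act \<pi> f) = best_L f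
    \<and> L2_norm (\<lambda>x. perm_act \<pi> f x - best_L f x) = L2_norm (\<lambda>x. f x - best_L f x)"
proof -
  have sym: "h (\<chi> i. x $ \<pi> i) = h x" if "h \<in> V_L" for h x
    using that os_perm[OF assms(2)] unfolding V_L_def by auto
  have normeq: "L2_norm (\<lambda>x. perm_act \<pi> f x - h x) = L2_norm (\<lambda>x. f x - h x)"
    if hV: "h \<in> V_L" for h
  proof -
    have hL: "in_L2 h" using hV TT_L2 by (auto simp: V_L_eq)
    have dL: "in_L2 (\<lambda>x. f x - h x)" by (rule L2_diff[OF assms(1) hL])
    have eq: "(\<lambda>x. (perm_act \<pi> f x - h x)\<^sup>2) = (\<lambda>x. (\<lambda>y. (f y - h y)\<^sup>2) (\<chi> i. x $ \<pi> i))"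
      using sym[OF hV] by (simp add: perm_act_def fun_eq_iff)
    have "integral\<^sup>L MM (\<lambda>x. (perm_act \<pi> f x - h x)\<^sup>2) = integral\<^sup>L MM (\<lambda>y. (f y - h y)\<^sup>2)"
      unfolding eq by (rule perm_integral[OF assms(2)]) (use dL in \<open>auto simp: in_L2_def\<close>)
    then show ?thesis unfolding L2_norm_def by simp
  qed
  have iff: "is_best_L (perm_act \<pi> f) g \<longleftrightarrow> is_best_L f g" for g
    unfolding is_best_L_def using normeq by auto
  have "best_L (perm_act \<pi> f) = best_L f"
    unfolding best_L_def iff ..
  moreover have "best_L f \<in> V_L" by (rule best_L_in_V[OF assms(1)])
  ultimately show ?thesis using normeq by simp
qed

end
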